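(* Let $2\le n\le\infty$, $r\ge0$ and let $A$ be an $n$-multicomplex. Then $E_{r+1}(C_r\otimes A)=0$.
   Context: Throughout, $R$ is a commutative unital ring. For $1\le n\le\infty$, an $n$-multicomplex is a $\mathbb Z\times\mathbb Z$-bigraded $R$-module $A=\{A^{p,q}\}$ with $R$-linear maps $d_i\colon A\to A$ ($i\ge0$) of bidegree $(-i,1-i)$ such that $\sum_{i+j=l}(-1)^id_id_j=0$ for all $l\ge0$, and $d_i=0$ for all $i\ge n$. A $2$-multicomplex is a bicomplex; any $n$-multicomplex is regarded as an $l$-multicomplex for $l\ge n$. Tensor product: $(A\otimes B)^{p,q}=\bigoplus_{p_1+p_2=p,\,q_1+q_2=q}A^{p_1,q_1}\otimes_RB^{p_2,q_2}$ with $d_i(a\otimes b)=d_ia\otimes b+(-1)^{\langle(-i,1-i),(a_1,a_2)\rangle}a\otimes d_ib$ for $a$ of bidegree $(a_1,a_2)$, where $\langle(x_1,x_2),(y_1,y_2)\rangle=x_1y_1+x_2y_2$. $C_r$ is the bicomplex $\mathcal ZW^2_r(0,0)$: for $r=0$ it is the free bicomplex on one generator $a_0$ in bidegree $(0,0)$ (free $R$-module on $a_0,d_0a_0,d_1a_0,d_0d_1a_0$); for $r\ge1$ it is the free $R$-module with basis $\beta_{-k,-k}$, $\beta_{-k-1,-k}$ ($0\le k\le r-1$; $\beta_{u,v}$ in bidegree $(u,v)$), with $d_1\beta_{-k,-k}=\beta_{-k-1,-k}$ for $0\le k\le r-1$, $d_0\beta_{-k,-k}=\beta_{-k,-k+1}$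 for $1\le k\le r-1$, and all other structure maps zero (a staircase with $r$ horizontal steps). Spectral sequence: $Z_0^{p,q}(A)=A^{p,q}$; for $r\ge1$, $Z_r^{p,q}(A)$ is the set of $a_0\in A^{p,q}$ for which there exist $a_j\in A^{p-j,q-j}$ ($1\le j\le r-1$) with $\sum_{i+j=l}(-1)^id_ia_j=0$ for $0\le l\le r-1$. $B_0=0$, $B_1^{p,q}(A)=A^{p,q}\cap\operatorname{im}d_0$, and for $r\ge2$, $B_r^{p,q}(A)$ is the set of $x\in A^{p,q}$ for which there exist $b_i\in A^{p+r-1-i,q+r-2-i}$ ($0\le i\le r-1$) with $x=\sum_{i=0}^{r-1}(-1)^id_ib_{r-1-i}$ and $\sum_{i=0}^l(-1)^id_ib_{l-i}=0$ for $0\le l\le r-2$. $E_r^{p,q}(A)=Z_r^{p,q}(A)/B_r^{p,q}(A)$; this is the spectral sequence of the column-filtered total complex. *)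

theory Defs
  imports Main "HOL-Library.Extended_Nat" "HOL-Library.Function_Algebras"
begin

(* Representation of a bigraded R-module: an ambient R-module (type 'b with scalar
   action scale of a commutative ring type 'r) together with a family of submodules
   A (p,q) playing the role of the homogeneous pieces A^{p,q}.  The structure maps
   are given degree-wise: d i (p,q) : A^{p,q} -> A^{p-i,q+1-i}. *)

definition sgnd :: "nat \<Rightarrow> 'b::ab_group_add \<Rightarrow> 'b" where
  "sgnd i x = (if even i then x else - x)"

definition shift :: "nat \<Rightarrow> int \<times> int \<Rightarrow> int \<times> int" where
  "shift i pq = (fst pq - int i, snd pq + 1 - int i)"

definition multicomplex ::
  "('r::comm_ring_1 \<Rightarrow> 'b::ab_group_add \<Rightarrow> 'b) \<Rightarrow> enat \<Rightarrow> (int \<times> int \<Rightarrow> 'b set)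
     \<Rightarrow> (nat \<Rightarrow> int \<times> int \<Rightarrow> 'b \<Rightarrow> 'b) \<Rightarrow> bool" where
  "multicomplex scale n A d \<longleftrightarrow>
     module scale \<and>
     (\<forall>pq. module.subspace scale (A pq)) \<and>
     (\<forall>i pq. \<forall>x\<in>A pq. d i pq x \<in> A (shift i pq)) \<and>
     (\<forall>i pq. \<forall>x\<in>A pq. \<forall>y\<in>A pq. d i pq (x + y) = d i pq x + d i pq y) \<and>
     (\<forall>i pq c. \<forall>x\<in>A pq. d i pq (scale c x) = scale c (d i pq x)) \<and>
     (\<forall>l pq. \<forall>x\<in>A pq.
        (\<Sum>i\<le>l. sgnd i (d i (shift (l - i) pq) (d (l - i) pq x))) = 0) \<and>
     (\<forall>i pq. n \<le> enat i \<longrightarrow> (\<forall>x\<in>A pq. d i pq x = 0))"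

definition Zs :: "(int \<times> int \<Rightarrow> 'b::ab_group_add set) \<Rightarrow> (nat \<Rightarrow> int \<times> int \<Rightarrow> 'b \<Rightarrow> 'b)
                  \<Rightarrow> nat \<Rightarrow> int \<Rightarrow> int \<Rightarrow> 'b set" where
  "Zs A d r p q =
    (if r = 0 then A (p, q)
     else {a0 \<in> A (p, q). \<exists>a :: nat \<Rightarrow> 'b. a 0 = a0 \<and>
            (\<forall>j\<in>{1..r-1}. a j \<in> A (p - int j, q - int j)) \<and>
            (\<forall>l\<le>r-1. (\<Sum>j\<le>l. sgnd (l - j) (d (l - j) (p - int j, q - int j) (a j))) = 0)})"

(* bidegree of b_k in the definition of B_r^{p,q} *)
definition bdeg :: "int \<Rightarrow> int \<Rightarrow> nat \<Rightarrow> nat \<Rightarrow> int \<times> int" where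
  "bdeg p q r k = (p + int r - 1 - int k, q + int r - 2 - int k)"

definition Bs :: "(int \<times> int \<Rightarrow> 'b::ab_group_add set) \<Rightarrow> (nat \<Rightarrow> int \<times> int \<Rightarrow> 'b \<Rightarrow> 'b)
                  \<Rightarrow> nat \<Rightarrow> int \<Rightarrow> int \<Rightarrow> 'b set" where
  "Bs A d r p q =
    (if r = 0 then {0}
     else if r = 1 then {x \<in> A (p, q). \<exists>b\<in>A (p, q - 1). x = d 0 (p, q - 1) b}
     else {x \<in> A (p, q). \<exists>b :: nat \<Rightarrow> 'b.
             (\<forall>i\<le>r-1. b i \<in> A (bdeg p q r i)) \<and>
             x = (\<Sum>i\<le>r-1. sgnd i (d i (bdeg p q r (r - 1 - i)) (b (r - 1 - i)))) \<and>
             (\<forall>l\<le>r-2. (\<Sum>i\<le>l. sgnd i (d i (bdeg p q r (l - i)) (b (l - i)))) = 0)})"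

(* E_r(A) = 0, i.e. Z_r^{p,q} = B_r^{p,q} for all (p,q) *)
definition E_vanishes :: "(int \<times> int \<Rightarrow> 'b::ab_group_add set) \<Rightarrow> (nat \<Rightarrow> int \<times> int \<Rightarrow> 'b \<Rightarrow> 'b)
                  \<Rightarrow> nat \<Rightarrow> bool" where
  "E_vanishes A d r \<longleftrightarrow> (\<forall>p q. Zs A d r p q = Bs A d r p q)"

(* It is free with at most one basis element in each bidegree,
   so basis elements are indexed by their bidegree.  Cbasis r is the set of bidegrees
   of basis elements; Cedge r i s means d_i e_s = e_{s + (-i,1-i)}, and
   d_i e_s = 0 otherwise (all nonzero structure constants are 1).
   For r = 0 the basis is a0 (0,0), d0 a0 (0,1), d1 a0 (-1,0), d0 d1 a0 = d1 d0 a0 (-1,1). *)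
definition Cbasis :: "nat \<Rightarrow> (int \<times> int) set" where
  "Cbasis r =
    (if r = 0 then {(0,0), (0,1), (-1,0), (-1,1)}
     else {(-k, -k) | k. 0 \<le> k \<and> k \<le> int r - 1} \<union> {(-k-1, -k) | k. 0 \<le> k \<and> k \<le> int r - 1})"

definition Cedge :: "nat \<Rightarrow> nat \<Rightarrow> int \<times> int \<Rightarrow> bool" where
  "Cedge r i s =
    (if r = 0 then
       (i = 0 \<and> (s = (0,0) \<or> s = (-1,0))) \<or>
       (i = 1 \<and> (s = (0,0) \<or> s = (0,1)))
     else
       (i = 1 \<and> (\<exists>k. 0 \<le> k \<and> k \<le> int r - 1 \<and> s = (-k, -k))) \<or>
       (i = 0 \<and> (\<exists>k. 1 \<le> k \<and> k \<le> int r - 1 \<and> s = (-k, -k))))"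

(* The tensor product C_r \<otimes> A, using that C_r is free on Cbasis r:
   an element of (C_r \<otimes> A)^{p,q} is  sum_s e_s \<otimes> x(s)  with x(s) \<in> A^{(p,q)-s}. *)
definition TA :: "nat \<Rightarrow> (int \<times> int \<Rightarrow> 'b::ab_group_add set) \<Rightarrow> int \<times> int \<Rightarrow> (int \<times> int \<Rightarrow> 'b) set" where
  "TA r A pq = {x. \<forall>s. (s \<in> Cbasis r \<longrightarrow> x s \<in> A (fst pq - fst s, snd pq - snd s)) \<and>
                        (s \<notin> Cbasis r \<longrightarrow> x s = 0)}"

(* d_i (e_s \<otimes> a) = d_i e_s \<otimes> a + (-1)^{<(-i,1-i),s>} e_s \<otimes> d_i a *)
definition Td :: "nat \<Rightarrow> (nat \<Rightarrow> int \<times> int \<Rightarrow> 'b::ab_group_add \<Rightarrow> 'b)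
                   \<Rightarrow> nat \<Rightarrow> int \<times> int \<Rightarrow> (int \<times> int \<Rightarrow> 'b) \<Rightarrow> (int \<times> int \<Rightarrow> 'b)" where
  "Td r d i pq x = (\<lambda>t.
     if t \<in> Cbasis r then
       (let s = (fst t + int i, snd t - 1 + int i) in
          (if Cedge r i s then x s else 0))
       + (if even (- int i * fst t + (1 - int i) * snd t)
          then d i (fst pq - fst t, snd pq - snd t) (x t)
          else - d i (fst pq - fst t, snd pq - snd t) (x t))
     else 0)"

end

theory Submission
  imports Defs
begin

lemma sum_fun_apply: "(\<Sum>i\<in>S. (f i :: 'a \<Rightarrow> 'c::comm_monoid_add)) t = (\<Sum>i\<in>S. f i t)"
  by (induct S rule: infinite_finite_induct) auto

lemma sgnd_0[simp]: "sgnd i 0 = 0" by (simp add: sgnd_def)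
lemma sgnd_zero[simp]: "sgnd 0 x = x" by (simp add: sgnd_def)
lemma sgnd_Suc: "sgnd (Suc i) x = - sgnd i x" by (simp add: sgnd_def)
lemma sgnd_add: "sgnd i (x + y) = sgnd i x + sgnd i y" by (simp add: sgnd_def)
lemma sgnd_minus: "sgnd i (- x) = - sgnd i x" by (simp add: sgnd_def)
lemma sgnd_diff: "sgnd i (x - y) = sgnd i x - sgnd i y" by (simp add: sgnd_def)
lemma sgnd_sgnd: "sgnd i (sgnd j x) = sgnd (i + j) x" by (simp add: sgnd_def)
lemma sgnd_sum: "sgnd i (\<Sum>k\<in>S. f k) = (\<Sum>k\<in>S. sgnd i (f k))"
  by (simp add: sgnd_def sum_negf)
lemma sgnd_fun: "sgnd i f t = sgnd i (f t)" by (simp add: sgnd_def)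
lemma sgnd_even: "even i \<Longrightarrow> sgnd i x = x" by (simp add: sgnd_def)
lemma sgnd_odd: "odd i \<Longrightarrow> sgnd i x = - x" by (simp add: sgnd_def)
lemma sgnd_par: "even i = even j \<Longrightarrow> sgnd i x = sgnd j x" by (simp add: sgnd_def)

locale mcl =
  fixes T :: "int \<times> int \<Rightarrow> 'c::ab_group_add set"
    and \<delta> :: "nat \<Rightarrow> int \<times> int \<Rightarrow> 'c \<Rightarrow> 'c"
  assumes T0[simp]: "0 \<in> T pq"
    and Tadd: "x \<in> T pq \<Longrightarrow> y \<in> T pq \<Longrightarrow> x + y \<in> T pq"
    and Tneg: "x \<in> T pq \<Longrightarrow> - x \<in> T pq"
    and \<delta>T: "x \<in> T pq \<Longrightarrow> \<delta> i pq x \<in> T (shift i pq)"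
    and \<delta>add: "x \<in> T pq \<Longrightarrow> y \<in> T pq \<Longrightarrow> \<delta> i pq (x + y) = \<delta> i pq x + \<delta> i pq y"
begin
lemma Tsum: "(\<And>i. i \<in> S \<Longrightarrow> f i \<in> T pq) \<Longrightarrow> sum f S \<in> T pq"
  by (induct S rule: infinite_finite_induct) (auto intro: Tadd)
lemma Tsgnd: "x \<in> T pq \<Longrightarrow> sgnd i x \<in> T pq" by (simp add: sgnd_def Tneg)
lemma Tdiff: "x \<in> T pq \<Longrightarrow> y \<in> T pq \<Longrightarrow> x - y \<in> T pq"
  by (metis diff_conv_add_uminus Tadd Tneg)
lemma \<delta>0[simp]: "\<delta> i pq 0 = 0"
proof -
  have "\<delta> i pq (0 + 0) = \<delta> i pq 0 + \<delta> i pq 0" by (rule \<delta>add) auto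
  thus ?thesis by simp
qed
lemma \<delta>neg: "x \<in> T pq \<Longrightarrow> \<delta> i pq (- x) = - \<delta> i pq x"
proof -
  assume x: "x \<in> T pq"
  have "\<delta> i pq (x + - x) = \<delta> i pq x + \<delta> i pq (- x)" by (rule \<delta>add[OF x Tneg[OF x]])
  hence "\<delta> i pq x + \<delta> i pq (- x) = 0" by simp
  thus ?thesis by (simp add: add_eq_0_iff)
qed
lemma \<delta>sgnd: "x \<in> T pq \<Longrightarrow> \<delta> i pq (sgnd j x) = sgnd j (\<delta> i pq x)"
  by (simp add: sgnd_def \<delta>neg)
lemma \<delta>diff: "x \<in> T pq \<Longrightarrow> y \<in> T pq \<Longrightarrow> \<delta> i pq (x - y) = \<delta> i pq x - \<delta> i pq y"
  by (metis diff_conv_add_uminus \<delta>add Tneg \<delta>neg)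
lemma \<delta>sum: "(\<And>k. k \<in> S \<Longrightarrow> f k \<in> T pq) \<Longrightarrow> \<delta> i pq (sum f S) = (\<Sum>k\<in>S. \<delta> i pq (f k))"
proof (induct S rule: infinite_finite_induct)
  case (insert x F) thus ?case by (simp add: \<delta>add Tsum)
qed auto
end

locale mcr = mcl +
  assumes rel: "x \<in> T pq \<Longrightarrow> (\<Sum>i\<le>l. sgnd i (\<delta> i (shift (l - i) pq) (\<delta> (l - i) pq x))) = 0"

lemma sum_split_rev: "(\<Sum>s\<le>l+i. g s) = (\<Sum>j\<le>l. g (l - j)) + (\<Sum>t<i. (g (Suc l + t) :: 'a::comm_monoid_add))"
proof -
  have "(\<Sum>s\<le>l+i. g s) = (\<Sum>s\<le>l. g s) + (\<Sum>t<i. g (Suc l + t))"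
    by (induct i) (simp_all add: add.assoc)
  moreover have "(\<Sum>s\<le>l. g s) = (\<Sum>j\<le>l. g (l - j))"
    by (rule sum.reindex_bij_witness[of _ "\<lambda>j. l - j" "\<lambda>j. l - j"]) auto
  ultimately show ?thesis by simp
qed

context mcr
begin

lemma B_sub_Z:
  assumes r: "0 < r" shows "Bs T \<delta> (Suc r) p q \<subseteq> Zs T \<delta> (Suc r) p q"
proof
  fix x assume "x \<in> Bs T \<delta> (Suc r) p q"
  then obtain b where x: "x \<in> T (p,q)" and bT: "\<forall>i\<le>r. b i \<in> T (bdeg p q (Suc r) i)"
    and xe: "x = (\<Sum>i\<le>r. sgnd i (\<delta> i (bdeg p q (Suc r) (r - i)) (b (r - i))))"
    and bc: "\<forall>l\<le>r-1. (\<Sum>i\<le>l. sgnd i (\<delta> i (bdeg p q (Suc r) (l - i)) (b (l - i)))) = 0"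
    using r unfolding Bs_def by auto
  define B where "B m = bdeg p q (Suc r) m" for m
  define a where "a j = (\<Sum>i\<le>r. sgnd i (\<delta> (i + j) (B (r - i)) (b (r - i))))" for j
  have shB: "shift (i + j) (B (r - i)) = (p - int j, q - int j)" if "i \<le> r" for i j
    using that by (simp add: shift_def B_def bdeg_def of_nat_diff)
  have bT': "b m \<in> T (B m)" if "m \<le> r" for m using bT that by (simp add: B_def)
  have aT: "a j \<in> T (p - int j, q - int j)" for j
    unfolding a_def by (intro Tsum Tsgnd) (metis \<delta>T bT' diff_le_self shB atMost_iff)
  have a0: "a 0 = x" by (simp add: a_def xe B_def)
  have Zl: "(\<Sum>j\<le>l. sgnd (l - j) (\<delta> (l - j) (p - int j, q - int j) (a j))) = 0" if l: "l \<le> r" for l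
  proof -
    define G where "G i s = sgnd s (\<delta> s (shift (l + i - s) (B (r - i))) (\<delta> (l + i - s) (B (r - i)) (b (r - i))))" for i s
    have G1: "G i (l - j) = sgnd (l - j) (\<delta> (l - j) (p - int j, q - int j) (\<delta> (i + j) (B (r - i)) (b (r - i))))"
      if "i \<le> r" "j \<le> l" for i j
    proof -
      have "l + i - (l - j) = i + j" using that by simp
      thus ?thesis using shB[OF that(1)] by (simp add: G_def)
    qed
    define H where "H i t = G i (Suc l + t)" for i t
    have "0 = (\<Sum>i\<le>r. sgnd i (\<Sum>s\<le>l+i. G i s))"
      using rel[OF bT'] by (simp add: G_def)
    also have "\<dots> = (\<Sum>i\<le>r. sgnd i (\<Sum>j\<le>l. G i (l - j))) + (\<Sum>i\<le>r. sgnd i (\<Sum>t<i. H i t))"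
      by (simp add: sum_split_rev sgnd_add sum.distrib H_def)
    also have "(\<Sum>i\<le>r. sgnd i (\<Sum>j\<le>l. G i (l - j))) = (\<Sum>j\<le>l. sgnd (l - j) (\<delta> (l - j) (p - int j, q - int j) (a j)))"
    proof -
      have "(\<Sum>i\<le>r. sgnd i (\<Sum>j\<le>l. G i (l - j)))
          = (\<Sum>i\<le>r. \<Sum>j\<le>l. sgnd i (sgnd (l - j) (\<delta> (l - j) (p - int j, q - int j) (\<delta> (i + j) (B (r - i)) (b (r - i))))))"
        by (intro sum.cong refl) (simp add: sgnd_sum G1)
      also have "\<dots> = (\<Sum>j\<le>l. \<Sum>i\<le>r. sgnd i (sgnd (l - j) (\<delta> (l - j) (p - int j, q - int j) (\<delta> (i + j) (B (r - i)) (b (r - i))))))"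
        by (rule sum.swap)
      also have "\<dots> = (\<Sum>j\<le>l. sgnd (l - j) (\<delta> (l - j) (p - int j, q - int j) (a j)))"
      proof (intro sum.cong refl)
        fix j
        have m: "sgnd i (\<delta> (i + j) (B (r - i)) (b (r - i))) \<in> T (p - int j, q - int j)" if "i \<in> {..r}" for i
          using that by (metis Tsgnd \<delta>T bT' diff_le_self shB atMost_iff)
        have "\<delta> (l - j) (p - int j, q - int j) (a j) = (\<Sum>i\<le>r. \<delta> (l - j) (p - int j, q - int j) (sgnd i (\<delta> (i + j) (B (r - i)) (b (r - i)))))"
          unfolding a_def by (rule \<delta>sum[OF m])
        also have "\<dots> = (\<Sum>i\<le>r. sgnd i (\<delta> (l - j) (p - int j, q - int j) (\<delta> (i + j) (B (r - i)) (b (r - i)))))"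
          by (intro sum.cong refl) (metis \<delta>sgnd \<delta>T bT' diff_le_self shB atMost_iff)
        finally show "(\<Sum>i\<le>r. sgnd i (sgnd (l - j) (\<delta> (l - j) (p - int j, q - int j) (\<delta> (i + j) (B (r - i)) (b (r - i))))))
          = sgnd (l - j) (\<delta> (l - j) (p - int j, q - int j) (a j))"
          by (simp add: sgnd_sum sgnd_sgnd add.commute)
      qed
      finally show ?thesis .
    qed
    also have "(\<Sum>i\<le>r. sgnd i (\<Sum>t<i. H i t)) = 0"
    proof -
      have "(\<Sum>i\<le>r. sgnd i (\<Sum>t<i. H i t)) = (\<Sum>i\<le>r. \<Sum>t<i. sgnd i (H i t))"
        by (simp add: sgnd_sum)
      also have "\<dots> = (\<Sum>t<r. \<Sum>i\<in>{Suc t..r}. sgnd i (H i t))"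
        by (rule sum.nested_swap')
      also have "\<dots> = 0"
      proof (rule sum.neutral, rule ballI)
        fix t assume t: "t \<in> {..<r}"
        define L where "L = r - Suc t"
        have L: "L \<le> r - 1" "Suc t + L = r" using t by (auto simp: L_def)
        define W where "W = (p + int r - int L, q + int r - int L)"
        have shW: "shift u (B (L - u)) = W" if "u \<le> L" for u
          using that L by (simp add: shift_def B_def bdeg_def W_def of_nat_diff)
        have mW: "\<delta> u (B (L - u)) (b (L - u)) \<in> T W" if "u \<le> L" for u
          using \<delta>T[OF bT'[of "L - u"], of u] shW[OF that] L by simp
        have "(\<Sum>i\<in>{Suc t..r}. sgnd i (H i t)) = (\<Sum>u\<in>{0..L}. sgnd (u + Suc t) (H (u + Suc t) t))"
        proof -
          have iv: "{0 + Suc t..L + Suc t} = {Suc t..r}" using L by auto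
          show ?thesis using sum.shift_bounds_cl_nat_ivl[of "\<lambda>i. sgnd i (H i t)" 0 "Suc t" L] unfolding iv .
        qed
        also have "\<dots> = (\<Sum>u\<le>L. sgnd (Suc l + t) (\<delta> (Suc l + t) W (sgnd (Suc t) (sgnd u (\<delta> u (B (L - u)) (b (L - u)))))))"
        proof (rule sum.cong)
          fix u assume u: "u \<in> {..L}"
          have e1: "l + (u + Suc t) - (Suc l + t) = u" by simp
          have e2: "r - (u + Suc t) = L - u" using L by simp
          have "sgnd (u + Suc t) (H (u + Suc t) t) = sgnd (u + Suc t) (sgnd (Suc l + t) (\<delta> (Suc l + t) W (\<delta> u (B (L - u)) (b (L - u)))))"
            unfolding H_def G_def e1 e2 using shW u by simp
          also have "\<dots> = sgnd (Suc l + t) (\<delta> (Suc l + t) W (sgnd (Suc t) (sgnd u (\<delta> u (B (L - u)) (b (L - u))))))"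
            using mW u by (simp add: \<delta>sgnd Tsgnd sgnd_sgnd ac_simps)
          finally show "sgnd (u + Suc t) (H (u + Suc t) t) = \<dots>" .
        qed (simp add: atLeast0AtMost)
        also have "\<dots> = sgnd (Suc l + t) (\<delta> (Suc l + t) W (sgnd (Suc t) (\<Sum>u\<le>L. sgnd u (\<delta> u (B (L - u)) (b (L - u))))))"
        proof -
          have "\<delta> (Suc l + t) W (\<Sum>u\<le>L. sgnd (Suc t) (sgnd u (\<delta> u (B (L - u)) (b (L - u)))))
             = (\<Sum>u\<le>L. \<delta> (Suc l + t) W (sgnd (Suc t) (sgnd u (\<delta> u (B (L - u)) (b (L - u))))))"
            by (rule \<delta>sum) (simp add: Tsgnd mW)
          thus ?thesis by (simp add: sgnd_sum)
        qed
        also have "(\<Sum>u\<le>L. sgnd u (\<delta> u (B (L - u)) (b (L - u)))) = 0"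
          using bc L by (simp add: B_def)
        finally show "(\<Sum>i\<in>{Suc t..r}. sgnd i (H i t)) = 0" by simp
      qed
      finally show ?thesis .
    qed
    finally show ?thesis by simp
  qed
  show "x \<in> Zs T \<delta> (Suc r) p q"
    unfolding Zs_def using x a0 aT Zl by auto
qed

end

lemma tele1: "(\<Sum>s\<le>(l::nat). (if 1 \<le> s then F (s - 1) else 0) - F s) = - (F l :: 'a::ab_group_add)"
  by (induct l) (simp_all add: algebra_simps)

lemma tele2: "(\<Sum>s\<le>(n::nat). if s = 0 then 0 else F (s - 1) - F s) = F 0 - (F n :: 'a::ab_group_add)"
  by (induct n) (simp_all add: algebra_simps)

lemma sum_if0: "(\<Sum>j\<le>(n::nat). if j = 0 then 0 else g j) = (\<Sum>j\<le>n. g j) - (g 0 :: 'a::ab_group_add)"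
  by (induct n) (simp_all add: algebra_simps)

lemma sum_if_cond: "(\<Sum>j\<in>S. if c then f j else 0) = (if c then (\<Sum>j\<in>S. f j) else (0::'a::comm_monoid_add))"
  by (cases c) simp_all

lemma tri: "(\<Sum>i\<le>(l::nat). \<Sum>j\<le>l-i. h i j) = (\<Sum>s\<le>l. \<Sum>i\<le>s. (h i (s - i) :: 'a::comm_monoid_add))"
proof -
  have e: "Sigma {..l} (\<lambda>i. {..l-i}) = {(i,j). i + j \<le> l}" by auto
  have "(\<Sum>i\<le>l. \<Sum>j\<le>l-i. h i j) = (\<Sum>(i,j)\<in>Sigma {..l} (\<lambda>i. {..l-i}). h i j)"
    by (rule sum.Sigma) auto
  also have "\<dots> = (\<Sum>(i,j)\<in>{(i,j). i + j \<le> l}. h i j)" unfolding e ..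
  also have "\<dots> = (\<Sum>s\<le>l. \<Sum>i\<le>s. h i (s - i))" by (rule sum.triangle_reindex_eq)
  finally show ?thesis .
qed

lemma sum_rev: "(\<Sum>j\<le>(s::nat). g j) = (\<Sum>i\<le>s. (g (s - i) :: 'a::comm_monoid_add))"
  using sum_split_rev[where l=s and i=0 and g=g] by simp

locale mcx =
  fixes scale :: "'r::comm_ring_1 \<Rightarrow> 'b::ab_group_add \<Rightarrow> 'b"
    and n :: enat and A :: "int \<times> int \<Rightarrow> 'b set"
    and d :: "nat \<Rightarrow> int \<times> int \<Rightarrow> 'b \<Rightarrow> 'b"
  assumes mc: "multicomplex scale n A d"
begin

lemma modl: "module scale" using mc unfolding multicomplex_def by blast
lemma subsp: "module.subspace scale (A pq)" using mc unfolding multicomplex_def by blast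

sublocale mcr A d
proof
  fix pq x y i l
  show "0 \<in> A pq" using module.subspace_0[OF modl subsp] .
  show "x \<in> A pq \<Longrightarrow> y \<in> A pq \<Longrightarrow> x + y \<in> A pq" using module.subspace_add[OF modl subsp] .
  show "x \<in> A pq \<Longrightarrow> - x \<in> A pq" using module.subspace_neg[OF modl subsp] .
  show "x \<in> A pq \<Longrightarrow> d i pq x \<in> A (shift i pq)" using mc unfolding multicomplex_def by blast
  show "x \<in> A pq \<Longrightarrow> y \<in> A pq \<Longrightarrow> d i pq (x + y) = d i pq x + d i pq y"
    using mc unfolding multicomplex_def by blast
  show "x \<in> A pq \<Longrightarrow> (\<Sum>i\<le>l. sgnd i (d i (shift (l - i) pq) (d (l - i) pq x))) = 0"
    using mc unfolding multicomplex_def by blast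
qed

end


definition al :: "nat \<Rightarrow> int \<times> int" where "al k = (- int k, - int k)"
definition ga :: "nat \<Rightarrow> int \<times> int" where "ga k = (- int k - 1, - int k)"

lemma al_eq[simp]: "al k = al m \<longleftrightarrow> k = m" by (simp add: al_def)
lemma ga_eq[simp]: "ga k = ga m \<longleftrightarrow> k = m" by (simp add: ga_def)
lemma al_ga[simp]: "al k \<noteq> ga m" "ga m \<noteq> al k" by (auto simp: al_def ga_def)

lemma Cbasis_pos: "0 < r \<Longrightarrow> t \<in> Cbasis r \<longleftrightarrow> (\<exists>k<r. t = al k) \<or> (\<exists>k<r. t = ga k)"
proof
  assume r: "0 < r" and t: "t \<in> Cbasis r"
  then obtain k where k: "0 \<le> k" "k \<le> int r - 1" "t = (-k,-k) \<or> t = (-k-1,-k)"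
    by (auto simp: Cbasis_def)
  then have "nat k < r" "int (nat k) = k" by auto
  then show "(\<exists>k<r. t = al k) \<or> (\<exists>k<r. t = ga k)" using k(3)
    by (metis al_def ga_def)
next
  assume r: "0 < r" and t: "(\<exists>k<r. t = al k) \<or> (\<exists>k<r. t = ga k)"
  then obtain k where k: "k < r" "t = al k \<or> t = ga k" by blast
  have "0 \<le> int k" "int k \<le> int r - 1" using k by auto
  then show "t \<in> Cbasis r" using r k(2) unfolding Cbasis_def al_def ga_def by auto
qed

lemma al_in: "k < r \<Longrightarrow> al k \<in> Cbasis r" using Cbasis_pos[of r "al k"] by auto
lemma ga_in: "k < r \<Longrightarrow> ga k \<in> Cbasis r" using Cbasis_pos[of r "ga k"] by auto
lemma al_notin: "0 < r \<Longrightarrow> r \<le> k \<Longrightarrow> al k \<notin> Cbasis r" using Cbasis_pos[of r "al k"] by auto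
lemma ga_notin: "0 < r \<Longrightarrow> r \<le> k \<Longrightarrow> ga k \<notin> Cbasis r" using Cbasis_pos[of r "ga k"] by auto

lemma Cedge_pos: "0 < r \<Longrightarrow> Cedge r i s \<longleftrightarrow>
   (i = 1 \<and> (\<exists>k<r. s = al k)) \<or> (i = 0 \<and> (\<exists>k. 1 \<le> k \<and> k < r \<and> s = al k))"
proof
  assume r: "0 < r" and c: "Cedge r i s"
  from c r obtain k where k: "0 \<le> k" "k \<le> int r - 1" "s = (-k,-k)" "i = 1 \<or> (i = 0 \<and> 1 \<le> k)"
    unfolding Cedge_def by auto
  then have "nat k < r" "int (nat k) = k" "s = al (nat k)" by (auto simp: al_def)
  then show "(i = 1 \<and> (\<exists>k<r. s = al k)) \<or> (i = 0 \<and> (\<exists>k. 1 \<le> k \<and> k < r \<and> s = al k))"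
    using k(4) by (metis One_nat_def Suc_leI \<open>int (nat k) = k\<close> k(1) nat_mono nat_one_as_int zero_less_nat_eq)
next
  assume r: "0 < r" and c: "(i = 1 \<and> (\<exists>k<r. s = al k)) \<or> (i = 0 \<and> (\<exists>k. 1 \<le> k \<and> k < r \<and> s = al k))"
  then obtain k where k: "k < r" "s = al k" "i = 1 \<or> (i = 0 \<and> 1 \<le> k)" by blast
  have "0 \<le> int k" "int k \<le> int r - 1" using k by auto
  then show "Cedge r i s" using r k unfolding Cedge_def al_def by auto
qed

lemma TA_memD: "X \<in> TA r A pq \<Longrightarrow> t \<in> Cbasis r \<Longrightarrow> X t \<in> A (fst pq - fst t, snd pq - snd t)"
  unfolding TA_def by blast
lemma TA_offD: "X \<in> TA r A pq \<Longrightarrow> t \<notin> Cbasis r \<Longrightarrow> X t = 0"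
  unfolding TA_def by blast
lemma TA_I: "(\<And>t. t \<in> Cbasis r \<Longrightarrow> X t \<in> A (fst pq - fst t, snd pq - snd t)) \<Longrightarrow> (\<And>t. t \<notin> Cbasis r \<Longrightarrow> X t = 0) \<Longrightarrow> X \<in> TA r A pq"
  unfolding TA_def by blast

definition tsg :: "nat \<Rightarrow> int \<times> int \<Rightarrow> nat" where
  "tsg i t = (if even (- int i * fst t + (1 - int i) * snd t) then 0 else 1)"

lemma Td_alt: "Td r d i pq X t = (if t \<in> Cbasis r then
   (if Cedge r i (fst t + int i, snd t - 1 + int i) then X (fst t + int i, snd t - 1 + int i) else 0)
   + sgnd (tsg i t) (d i (fst pq - fst t, snd pq - snd t) (X t)) else 0)"
proof (cases "even (- int i * fst t + (1 - int i) * snd t)")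
  case True
  then show ?thesis unfolding Td_def Let_def tsg_def sgnd_def by (simp only: if_True even_zero)
next
  case False
  then show ?thesis unfolding Td_def Let_def tsg_def sgnd_def by (simp only: if_False odd_one)
qed

lemma TA_al: assumes X: "X \<in> TA r A pq" and k: "k < r"
  shows "X (al k) \<in> A (fst pq + int k, snd pq + int k)"
proof -
  have eq: "(fst pq - fst (al k), snd pq - snd (al k)) = (fst pq + int k, snd pq + int k)" by (simp add: al_def)
  show ?thesis using TA_memD[OF X al_in[OF k], unfolded eq] .
qed
lemma TA_ga: assumes X: "X \<in> TA r A pq" and k: "k < r"
  shows "X (ga k) \<in> A (fst pq + int k + 1, snd pq + int k)"
proof -
  have eq: "(fst pq - fst (ga k), snd pq - snd (ga k)) = (fst pq + int k + 1, snd pq + int k)" by (simp add: ga_def)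
  show ?thesis using TA_memD[OF X ga_in[OF k], unfolded eq] .
qed

lemma Td_off: "t \<notin> Cbasis r \<Longrightarrow> Td r d i pq X t = 0"
  by (simp add: Td_def)

lemma Td_al:
  assumes r: "0 < r" and k: "k < r"
  shows "Td r d i pq X (al k) = sgnd k (d i (fst pq + int k, snd pq + int k) (X (al k)))"
proof -
  have inC: "al k \<in> Cbasis r" using al_in k by auto
  have nE: "\<not> Cedge r i (fst (al k) + int i, snd (al k) - 1 + int i)"
    using Cedge_pos[OF r] by (auto simp: al_def)
  have "- int i * fst (al k) + (1 - int i) * snd (al k) = 2 * (int i * int k) - int k"
    by (simp add: al_def algebra_simps)
  then have par: "even (- int i * fst (al k) + (1 - int i) * snd (al k)) = even k" by simp
  have ix: "(fst pq - fst (al k), snd pq - snd (al k)) = (fst pq + int k, snd pq + int k)"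
    by (simp add: al_def)
  show ?thesis unfolding Td_def Let_def using inC nE
    by (simp only: if_True if_False par ix add_0 flip: sgnd_def)
qed

lemma Td_ga:
  assumes r: "0 < r" and k: "k < r"
  shows "Td r d i pq X (ga k) = (if i = 1 then X (al k) else 0)
     + (if i = 0 \<and> Suc k < r then X (al (Suc k)) else 0)
     + sgnd (i + k) (d i (fst pq + int k + 1, snd pq + int k) (X (ga k)))"
proof -
  have inC: "ga k \<in> Cbasis r" using ga_in k by auto
  have E: "(if Cedge r i (fst (ga k) + int i, snd (ga k) - 1 + int i) then X (fst (ga k) + int i, snd (ga k) - 1 + int i) else 0)
     = (if i = 1 then X (al k) else 0) + (if i = 0 \<and> Suc k < r then X (al (Suc k)) else 0)"
  proof (cases "i = 0")
    case True
    have s: "(fst (ga k) + int i, snd (ga k) - 1 + int i) = al (Suc k)" using True by (simp add: ga_def al_def)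
    show ?thesis unfolding s using True Cedge_pos[OF r, of 0 "al (Suc k)"] by auto
  next
    case F: False
    show ?thesis
    proof (cases "i = 1")
      case True
      have s: "(fst (ga k) + int i, snd (ga k) - 1 + int i) = al k" using True by (simp add: ga_def al_def)
      show ?thesis unfolding s using True k Cedge_pos[OF r, of 1 "al k"] by auto
    next
      case False
      then show ?thesis using F Cedge_pos[OF r, of i] by auto
    qed
  qed
  have "- int i * fst (ga k) + (1 - int i) * snd (ga k) = 2 * (int i * int k) + int i - int k"
    by (simp add: ga_def algebra_simps)
  then have par: "even (- int i * fst (ga k) + (1 - int i) * snd (ga k)) = even (i + k)" by simp
  have ix: "(fst pq - fst (ga k), snd pq - snd (ga k)) = (fst pq + int k + 1, snd pq + int k)"
    by (simp add: ga_def)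
  show ?thesis unfolding Td_def Let_def using inC
    by (simp only: if_True E par ix flip: sgnd_def)
qed

context mcx
begin

lemma TA_mcl: "mcl (TA r A) (Td r d)"
proof
  fix pq :: "int \<times> int" and x y :: "int \<times> int \<Rightarrow> 'b" and i :: nat
  show "0 \<in> TA r A pq" by (simp add: TA_def)
  show "x \<in> TA r A pq \<Longrightarrow> y \<in> TA r A pq \<Longrightarrow> x + y \<in> TA r A pq"
    by (simp add: TA_def Tadd)
  show "x \<in> TA r A pq \<Longrightarrow> - x \<in> TA r A pq"
    by (simp add: TA_def Tneg)
  show "x \<in> TA r A pq \<Longrightarrow> Td r d i pq x \<in> TA r A (shift i pq)"
  proof -
    assume x: "x \<in> TA r A pq"
    show ?thesis unfolding TA_def
    proof (intro CollectI allI conjI impI)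
      fix t assume t: "t \<in> Cbasis r"
      let ?s = "(fst t + int i, snd t - 1 + int i)"
      have e: "Cedge r i ?s \<Longrightarrow> x ?s \<in> A (fst (shift i pq) - fst t, snd (shift i pq) - snd t)"
      proof -
        assume c: "Cedge r i ?s"
        have "?s \<in> Cbasis r"
        proof (cases "r = 0")
          case True thus ?thesis using c by (auto simp: Cedge_def Cbasis_def)
        next
          case False thus ?thesis using c Cedge_pos[of r i ?s] al_in by auto
        qed
        then have "x ?s \<in> A (fst pq - fst ?s, snd pq - snd ?s)" using x by (rule TA_memD[rotated])
        moreover have "(fst pq - fst ?s, snd pq - snd ?s) = (fst (shift i pq) - fst t, snd (shift i pq) - snd t)"
          by (simp add: shift_def)
        ultimately show ?thesis by (simp only:)
      qed
      have "d i (fst pq - fst t, snd pq - snd t) (x t) \<in> A (shift i (fst pq - fst t, snd pq - snd t))"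
        using x t by (intro \<delta>T TA_memD)
      moreover have "shift i (fst pq - fst t, snd pq - snd t) = (fst (shift i pq) - fst t, snd (shift i pq) - snd t)"
        by (simp add: shift_def)
      ultimately have dd: "d i (fst pq - fst t, snd pq - snd t) (x t) \<in> A (fst (shift i pq) - fst t, snd (shift i pq) - snd t)"
        by simp
      show "Td r d i pq x t \<in> A (fst (shift i pq) - fst t, snd (shift i pq) - snd t)"
        unfolding Td_def Let_def using t e dd by (auto intro!: Tadd Tneg Tdiff)
    next
      fix t assume "t \<notin> Cbasis r" thus "Td r d i pq x t = 0" by (rule Td_off)
    qed
  qed
  show "x \<in> TA r A pq \<Longrightarrow> y \<in> TA r A pq \<Longrightarrow> Td r d i pq (x + y) = Td r d i pq x + Td r d i pq y"
  proof -
    assume x: "x \<in> TA r A pq" and y: "y \<in> TA r A pq"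
    show ?thesis
    proof
      fix t
      show "Td r d i pq (x + y) t = (Td r d i pq x + Td r d i pq y) t"
      proof (cases "t \<in> Cbasis r")
        case True
        then have "x t \<in> A (fst pq - fst t, snd pq - snd t)" "y t \<in> A (fst pq - fst t, snd pq - snd t)"
          using x y by (auto intro: TA_memD)
        then show ?thesis using True unfolding Td_alt plus_fun_apply
          by (cases "Cedge r i (fst t + int i, snd t - 1 + int i)") (simp_all add: \<delta>add sgnd_add add_ac)
      qed (simp add: Td_def)
    qed
  qed
qed


lemma shift_plus: "(fst (shift j pq) + a, snd (shift j pq) + b) = shift j (fst pq + a, snd pq + b)"
  by (simp add: shift_def)

lemma Td_rel_al:
  assumes r: "0 < r" and X: "X \<in> TA r A pq" and k: "k < r"
  shows "(\<Sum>i\<le>l. sgnd i (Td r d i (shift (l - i) pq) (Td r d (l - i) pq X) (al k))) = 0"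
proof -
  define P0 where "P0 = (fst pq + int k, snd pq + int k)"
  have Xa: "X (al k) \<in> A P0" unfolding P0_def by (rule TA_al[OF X k])
  have "(\<Sum>i\<le>l. sgnd i (Td r d i (shift (l - i) pq) (Td r d (l - i) pq X) (al k)))
      = (\<Sum>i\<le>l. sgnd i (d i (shift (l - i) P0) (d (l - i) P0 (X (al k)))))"
  proof (rule sum.cong[OF refl])
    fix i
    have "Td r d i (shift (l - i) pq) (Td r d (l - i) pq X) (al k)
        = sgnd k (d i (shift (l - i) P0) (sgnd k (d (l - i) P0 (X (al k)))))"
      by (simp only: Td_al[OF r k] shift_plus P0_def)
    also have "\<dots> = sgnd k (sgnd k (d i (shift (l - i) P0) (d (l - i) P0 (X (al k)))))"
      using \<delta>sgnd[OF \<delta>T[OF Xa]] by simp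
    also have "\<dots> = d i (shift (l - i) P0) (d (l - i) P0 (X (al k)))"
      by (simp add: sgnd_sgnd sgnd_even)
    finally show "sgnd i (Td r d i (shift (l - i) pq) (Td r d (l - i) pq X) (al k)) =
       sgnd i (d i (shift (l - i) P0) (d (l - i) P0 (X (al k))))" by simp
  qed
  also have "\<dots> = 0" by (rule rel[OF Xa])
  finally show ?thesis .
qed

lemma sum_if_eq_const: "(\<Sum>i\<le>(l::nat). if i = m then c else (0::'a::comm_monoid_add)) = (if m \<le> l then c else 0)"
  by (induct l) auto

lemma Td_rel_ga:
  assumes r: "0 < r" and X: "X \<in> TA r A pq" and k: "k < r"
  shows "(\<Sum>i\<le>l. sgnd i (Td r d i (shift (l - i) pq) (Td r d (l - i) pq X) (ga k))) = 0"
proof -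
  define P0 where "P0 = (fst pq + int k, snd pq + int k)"
  define P1 where "P1 = (fst pq + int (Suc k), snd pq + int (Suc k))"
  define Q where "Q = (fst pq + int k + 1, snd pq + int k)"
  define Xa where "Xa = X (al k)"
  define Xa1 where "Xa1 = X (al (Suc k))"
  define Xg where "Xg = X (ga k)"
  have Xa: "Xa \<in> A P0" unfolding P0_def Xa_def by (rule TA_al[OF X k])
  have Xa1: "Xa1 \<in> A P1"
  proof (cases "Suc k < r")
    case True thus ?thesis unfolding P1_def Xa1_def by (rule TA_al[OF X])
  next
    case False thus ?thesis using TA_offD[OF X al_notin[OF r]] by (simp add: Xa1_def)
  qed
  have Xg: "Xg \<in> A Q" unfolding Q_def Xg_def by (rule TA_ga[OF X k])
  have sQ1: "shift 1 Q = P0" by (simp add: shift_def Q_def P0_def)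
  have sQ0: "shift 0 Q = P1" by (simp add: shift_def Q_def P1_def)
  define V where "V (j::nat) = (if j = 1 then Xa else if j = 0 \<and> Suc k < r then Xa1 else 0)" for j
  have inner: "Td r d j pq X (ga k) = V j + sgnd (j + k) (d j Q Xg)" for j
    unfolding Td_ga[OF r k] V_def Xa_def Xa1_def Xg_def Q_def by simp
  have VA: "V j \<in> A (shift j Q)" for j
    using Xa Xa1 sQ0 sQ1 by (auto simp: V_def)
  have dV: "d i (shift j Q) (V j) = (if j = 1 then d i P0 Xa else if j = 0 \<and> Suc k < r then d i P1 Xa1 else 0)" for i j
    using sQ0 sQ1 by (auto simp: V_def)
  define F1 where "F1 (i::nat) = (if i = 1 then - sgnd k (d (l - 1) P0 Xa) else 0)" for i
  define F2 where "F2 (i::nat) = (if i = 0 then (if Suc k < r then - sgnd k (d l P1 Xa1) else 0) else 0)" for i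
  define F3 where "F3 (i::nat) = (if 1 \<le> l then (if i = l - 1 then sgnd k (d (l - 1) P0 Xa) else 0) else 0)" for i
  define F4 where "F4 (i::nat) = (if i = l then (if Suc k < r then sgnd k (d l P1 Xa1) else 0) else 0)" for i
  define M where "M (i::nat) = sgnd l (sgnd i (d i (shift (l - i) Q) (d (l - i) Q Xg)))" for i
  have tm: "sgnd i (Td r d i (shift (l - i) pq) (Td r d (l - i) pq X) (ga k))
     = F1 i + F2 i + F3 i + F4 i + M i" if il: "i \<le> l" for i
  proof -
    let ?j = "l - i"
    have Y1: "Td r d ?j pq X (al k) = sgnd k (d ?j P0 Xa)"
      by (simp only: Td_al[OF r k] P0_def Xa_def)
    have Y2: "Suc k < r \<Longrightarrow> Td r d ?j pq X (al (Suc k)) = sgnd (Suc k) (d ?j P1 Xa1)"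
      by (simp only: Td_al[OF r] P1_def Xa1_def)
    have sh: "(fst (shift ?j pq) + int k + 1, snd (shift ?j pq) + int k) = shift ?j Q"
      by (simp add: shift_def Q_def)
    have "Td r d i (shift ?j pq) (Td r d ?j pq X) (ga k)
       = (if i = 1 then Td r d ?j pq X (al k) else 0)
         + (if i = 0 \<and> Suc k < r then Td r d ?j pq X (al (Suc k)) else 0)
         + sgnd (i + k) (d i (shift ?j Q) (V ?j + sgnd (?j + k) (d ?j Q Xg)))"
      by (subst Td_ga[OF r k]) (simp only: sh inner)
    also have "d i (shift ?j Q) (V ?j + sgnd (?j + k) (d ?j Q Xg))
       = d i (shift ?j Q) (V ?j) + sgnd (?j + k) (d i (shift ?j Q) (d ?j Q Xg))"
      using VA \<delta>T[OF Xg] by (simp add: \<delta>add Tsgnd \<delta>sgnd)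
    finally have e: "Td r d i (shift ?j pq) (Td r d ?j pq X) (ga k)
       = (if i = 1 then sgnd k (d ?j P0 Xa) else 0)
         + (if i = 0 \<and> Suc k < r then sgnd (Suc k) (d ?j P1 Xa1) else 0)
         + sgnd (i + k) ((if ?j = 1 then d i P0 Xa else if ?j = 0 \<and> Suc k < r then d i P1 Xa1 else 0)
             + sgnd (?j + k) (d i (shift ?j Q) (d ?j Q Xg)))"
      using Y1 Y2 dV by auto
    show ?thesis unfolding e F1_def F2_def F3_def F4_def M_def using il
      by (auto simp: sgnd_def) presburger+
  qed
  have s13: "sum F1 {..l} + sum F3 {..l} = 0"
  proof (cases l)
    case 0 thus ?thesis by (simp add: F1_def F3_def)
  next
    case (Suc m)
    thus ?thesis unfolding F1_def F3_def by (simp add: sum_if_eq_const)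
  qed
  have s24: "sum F2 {..l} + sum F4 {..l} = 0"
    unfolding F2_def F4_def by (simp add: sum_if_eq_const)
  have sM: "sum M {..l} = 0"
    unfolding M_def sgnd_sum[symmetric] using rel[OF Xg] by simp
  have "(\<Sum>i\<le>l. sgnd i (Td r d i (shift (l - i) pq) (Td r d (l - i) pq X) (ga k)))
      = (\<Sum>i\<le>l. F1 i + F2 i + F3 i + F4 i + M i)"
    using tm by (intro sum.cong) auto
  also have "\<dots> = sum F1 {..l} + sum F2 {..l} + sum F3 {..l} + sum F4 {..l} + sum M {..l}"
    by (simp add: sum.distrib)
  also have "\<dots> = (sum F1 {..l} + sum F3 {..l}) + (sum F2 {..l} + sum F4 {..l}) + sum M {..l}"
    by (simp add: ac_simps)
  also have "\<dots> = 0" using s13 s24 sM by simp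
  finally show ?thesis .
qed

lemma TA_mcr: assumes r: "0 < r" shows "mcr (TA r A) (Td r d)"
proof -
  interpret T: mcl "TA r A" "Td r d" by (rule TA_mcl)
  show ?thesis
  proof
    fix X pq l assume X: "X \<in> TA r A pq"
    show "(\<Sum>i\<le>l. sgnd i (Td r d i (shift (l - i) pq) (Td r d (l - i) pq X))) = 0"
    proof
      fix t
      show "(\<Sum>i\<le>l. sgnd i (Td r d i (shift (l - i) pq) (Td r d (l - i) pq X))) t = 0 t"
      proof (cases "t \<in> Cbasis r")
        case False thus ?thesis by (simp add: sum_fun_apply sgnd_fun Td_off)
      next
        case True
        then consider k where "k < r" "t = al k" | k where "k < r" "t = ga k"
          using Cbasis_pos[OF r] by blast
        thus ?thesis
        proof cases
          case 1 thus ?thesis using Td_rel_al[OF r X 1(1)] by (simp add: sum_fun_apply sgnd_fun)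
        next
          case 2 thus ?thesis using Td_rel_ga[OF r X 2(1)] by (simp add: sum_fun_apply sgnd_fun)
        qed
      qed
    qed
  qed
qed


lemma Cbasis0: "t \<in> Cbasis 0 \<longleftrightarrow> t = (0,0) \<or> t = (0,1) \<or> t = (-1,0) \<or> t = (-1,1)"
  by (simp add: Cbasis_def)

lemma Td_r0:
 "Td 0 d 0 pq X (0,0) = d 0 pq (X (0,0))"
 "Td 0 d 0 pq X (0,1) = X (0,0) - d 0 (fst pq, snd pq - 1) (X (0,1))"
 "Td 0 d 0 pq X (-1,0) = d 0 (fst pq + 1, snd pq) (X (-1,0))"
 "Td 0 d 0 pq X (-1,1) = X (-1,0) - d 0 (fst pq + 1, snd pq - 1) (X (-1,1))"
  by (simp_all add: Td_def Cbasis_def Cedge_def)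

lemma TA_r0: assumes X: "X \<in> TA 0 A (P,Q)"
  shows "X (0,0) \<in> A (P,Q)" "X (0,1) \<in> A (P,Q-1)" "X (-1,0) \<in> A (P+1,Q)" "X (-1,1) \<in> A (P+1,Q-1)"
  using TA_memD[OF X, of "(0,0)"] TA_memD[OF X, of "(0,1)"] TA_memD[OF X, of "(-1,0)"] TA_memD[OF X, of "(-1,1)"]
  by (simp_all add: Cbasis0)

lemma dd0: "x \<in> A (a, b) \<Longrightarrow> d 0 (a, b + 1) (d 0 (a, b) x) = 0"
  using rel[of x "(a,b)" 0] by (simp add: shift_def)

lemma dd0': "x \<in> A (a, b - 1) \<Longrightarrow> d 0 (a, b) (d 0 (a, b - 1) x) = 0"
  using dd0[of x a "b - 1"] by simp

lemma Td00: assumes X: "X \<in> TA 0 A (P,Q)" shows "Td 0 d 0 (P, Q + 1) (Td 0 d 0 (P,Q) X) = 0"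
proof
  fix t
  note m = TA_r0[OF X]
  have m2: "d 0 (P, Q - 1) (X (0,1)) \<in> A (P,Q)" using \<delta>T[OF m(2), of 0] by (simp add: shift_def)
  have m4: "d 0 (P + 1, Q - 1) (X (-1,1)) \<in> A (P + 1,Q)" using \<delta>T[OF m(4), of 0] by (simp add: shift_def)
  show "Td 0 d 0 (P, Q + 1) (Td 0 d 0 (P,Q) X) t = 0 t"
  proof (cases "t \<in> Cbasis 0")
    case False thus ?thesis by (simp add: Td_off)
  next
    case True
    then consider "t = (0,0)" | "t = (0,1)" | "t = (-1,0)" | "t = (-1,1)" by (auto simp: Cbasis0)
    thus ?thesis
    proof cases
      case 1 thus ?thesis using dd0[OF m(1)] by (simp add: Td_r0)
    next
      case 2 thus ?thesis using dd0'[OF m(2)] m m2 by (simp add: Td_r0 \<delta>diff)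
    next
      case 3 thus ?thesis using dd0[OF m(3)] by (simp add: Td_r0)
    next
      case 4 thus ?thesis using dd0'[OF m(4)] m m4 by (simp add: Td_r0 \<delta>diff)
    qed
  qed
qed

lemma r0_case: "E_vanishes (TA 0 A) (Td 0 d) 1"
  unfolding E_vanishes_def
proof (intro allI set_eqI iffI)
  fix p q x
  assume "x \<in> Zs (TA 0 A) (Td 0 d) 1 p q"
  then obtain a where x: "x \<in> TA 0 A (p,q)" and a0: "a 0 = x"
    and z0: "(\<Sum>j\<le>0. sgnd (0 - j) (Td 0 d (0 - j) (p - int j, q - int j) (a j))) = 0"
    unfolding Zs_def by auto
  have z: "Td 0 d 0 (p,q) x = 0" using z0 a0 by simp
  define b where "b t = (if t = (0,0) then x (0,1) else if t = (-1,0) then x (-1,1) else 0)" for t :: "int \<times> int"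
  note m = TA_r0[OF x]
  have bT: "b \<in> TA 0 A (p, q - 1)"
  proof (rule TA_I)
    fix t assume "t \<in> Cbasis 0"
    then consider "t = (0,0)" | "t = (0,1)" | "t = (-1,0)" | "t = (-1,1)" by (auto simp: Cbasis0)
    thus "b t \<in> A (fst (p, q - 1) - fst t, snd (p, q - 1) - snd t)"
      by cases (use m in \<open>simp_all add: b_def\<close>)
  next
    fix t assume "t \<notin> Cbasis 0" thus "b t = 0" by (auto simp: b_def Cbasis0)
  qed
  have zz: "Td 0 d 0 (p,q) x t = 0" for t using z by simp
  have xe: "x = Td 0 d 0 (p, q - 1) b"
  proof
    fix t
    show "x t = Td 0 d 0 (p, q - 1) b t"
    proof (cases "t \<in> Cbasis 0")
      case False thus ?thesis using TA_offD[OF x False] by (simp add: Td_off)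
    next
      case True
      then consider "t = (0,0)" | "t = (0,1)" | "t = (-1,0)" | "t = (-1,1)" by (auto simp: Cbasis0)
      thus ?thesis
      proof cases
        case 1 thus ?thesis using zz[of "(0,1)"] by (simp add: Td_r0 b_def)
      next
        case 2 thus ?thesis by (simp add: Td_r0 b_def)
      next
        case 3 thus ?thesis using zz[of "(-1,1)"] by (simp add: Td_r0 b_def)
      next
        case 4 thus ?thesis by (simp add: Td_r0 b_def)
      qed
    qed
  qed
  show "x \<in> Bs (TA 0 A) (Td 0 d) 1 p q"
    unfolding Bs_def using x bT xe by auto
next
  fix p q x
  assume "x \<in> Bs (TA 0 A) (Td 0 d) 1 p q"
  then obtain b where x: "x \<in> TA 0 A (p,q)" and b: "b \<in> TA 0 A (p, q - 1)" and xe: "x = Td 0 d 0 (p, q - 1) b"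
    unfolding Bs_def by auto
  have "Td 0 d 0 (p, q) x = 0" using Td00[OF b] xe by simp
  then show "x \<in> Zs (TA 0 A) (Td 0 d) 1 p q"
    unfolding Zs_def using x by (auto intro!: exI[of _ "\<lambda>_. x"])
qed


lemma Z_sub_B:
  assumes r: "0 < r" shows "Zs (TA r A) (Td r d) (Suc r) p q \<subseteq> Bs (TA r A) (Td r d) (Suc r) p q"
proof
  fix x assume "x \<in> Zs (TA r A) (Td r d) (Suc r) p q"
  then obtain a where x: "x \<in> TA r A (p,q)" and a0: "a 0 = x"
    and aT1: "\<forall>j\<in>{1..r}. a j \<in> TA r A (p - int j, q - int j)"
    and Zeq: "\<forall>l\<le>r. (\<Sum>j\<le>l. sgnd (l - j) (Td r d (l - j) (p - int j, q - int j) (a j))) = 0"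
    unfolding Zs_def by auto
  have aT: "a j \<in> TA r A (p - int j, q - int j)" if "j \<le> r" for j
  proof (cases "j = 0")
    case True thus ?thesis using x a0 by simp
  next
    case False then have "j \<in> {1..r}" using that by auto
    thus ?thesis using aT1 by blast
  qed
  have aga: "a j (ga K) \<in> A (p - int j + int K + 1, q - int j + int K)" if "j \<le> r" for j K
  proof (cases "K < r")
    case True thus ?thesis using TA_ga[OF aT[OF that] True] by simp
  next
    case False thus ?thesis using TA_offD[OF aT[OF that] ga_notin[OF r]] by simp
  qed
  have agaz: "a j (ga K) = 0" if "j \<le> r" "r \<le> K" for j K
    using TA_offD[OF aT[OF that(1)] ga_notin[OF r that(2)]] .
  have alaz: "a j (al K) = 0" if "j \<le> r" "r \<le> K" for j K
    using TA_offD[OF aT[OF that(1)] al_notin[OF r that(2)]] .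
  have ZGj: "(\<Sum>j\<le>s. d (s - j) (p - int j + int K + 1, q - int j + int K) (a j (ga K)))
      = sgnd K ((if 1 \<le> s then a (s - 1) (al K) else 0) - a s (al (Suc K)))" if s: "s \<le> r" for s K
  proof (cases "K < r")
    case False
    then show ?thesis using agaz alaz s by simp
  next
    case K: True
    define X where "X = (if 1 \<le> s then - a (s - 1) (al K) else 0)"
    define Y where "Y = a s (al (Suc K))"
    define Z where "Z = (\<Sum>j\<le>s. d (s - j) (p - int j + int K + 1, q - int j + int K) (a j (ga K)))"
    have "0 = (\<Sum>j\<le>s. sgnd (s - j) (Td r d (s - j) (p - int j, q - int j) (a j))) (ga K)"
      using Zeq s by simp
    also have "\<dots> = (\<Sum>j\<le>s. sgnd (s - j) (Td r d (s - j) (p - int j, q - int j) (a j) (ga K)))"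
      by (simp add: sum_fun_apply sgnd_fun)
    also have "\<dots> = (\<Sum>j\<le>s. (if 1 \<le> s then (if j = s - 1 then - a (s - 1) (al K) else 0) else 0)
          + (if Suc K < r then (if j = s then a s (al (Suc K)) else 0) else 0)
          + sgnd K (d (s - j) (p - int j + int K + 1, q - int j + int K) (a j (ga K))))"
    proof (rule sum.cong[OF refl])
      fix j assume j: "j \<in> {..s}"
      show "sgnd (s - j) (Td r d (s - j) (p - int j, q - int j) (a j) (ga K)) = (if 1 \<le> s then (if j = s - 1 then - a (s - 1) (al K) else 0) else 0)
          + (if Suc K < r then (if j = s then a s (al (Suc K)) else 0) else 0)
          + sgnd K (d (s - j) (p - int j + int K + 1, q - int j + int K) (a j (ga K)))"
        unfolding Td_ga[OF r K] using j by (auto simp: sgnd_def Suc_le_eq)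
    qed
    also have "\<dots> = X + (if Suc K < r then Y else 0) + sgnd K Z"
      by (simp add: sum.distrib sum_if_eq_const sum_if_cond sgnd_sum X_def Y_def Z_def)
    also have "(if Suc K < r then Y else 0) = Y" using alaz[OF s, of "Suc K"] by (auto simp: Y_def)
    finally have "X + Y + sgnd K Z = 0" by simp
    then have "sgnd K Z = - (X + Y)" by (rule iffD1[OF add_eq_0_iff])
    then have "sgnd K (sgnd K Z) = sgnd K (- (X + Y))" by simp
    then show ?thesis by (simp add: sgnd_sgnd sgnd_even Z_def X_def Y_def)
  qed
  have ZG: "(\<Sum>i\<le>s. d i (p - int (s - i) + int K + 1, q - int (s - i) + int K) (a (s - i) (ga K)))
      = sgnd K ((if 1 \<le> s then a (s - 1) (al K) else 0) - a s (al (Suc K)))" if s: "s \<le> r" for s K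
  proof -
    have "(\<Sum>i\<le>s. d i (p - int (s - i) + int K + 1, q - int (s - i) + int K) (a (s - i) (ga K)))
        = (\<Sum>i\<le>s. d (s - (s - i)) (p - int (s - i) + int K + 1, q - int (s - i) + int K) (a (s - i) (ga K)))"
      by (intro sum.cong refl) simp
    also have "\<dots> = (\<Sum>j\<le>s. d (s - j) (p - int j + int K + 1, q - int j + int K) (a j (ga K)))"
      by (rule sum_rev[symmetric])
    finally show ?thesis using ZGj[OF s] by simp
  qed
  define w where "w m k = - (\<Sum>j\<le>m. if m = r \<and> j = 0 then 0 else sgnd j (a j (ga (k + j + r - Suc m))))" for m k
  define b where "b m t = (if (\<exists>k<r. t = al k) then w m (nat (- fst t)) else 0)" for m t
  have b_al: "b m (al k) = w m k" if "k < r" for m k using that by (auto simp: b_def al_def)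
  have b_ga: "b m (ga k) = 0" for m k by (auto simp: b_def)
  have b_off: "b m t = 0" if "t \<notin> Cbasis r" for m t using that al_in by (auto simp: b_def)
  have wterm: "(if m = r \<and> j = 0 then 0 else sgnd j (a j (ga (k + j + r - Suc m))))
      \<in> A (p + int r - int m + int k, q + int r - 1 - int m + int k)" if "m \<le> r" "j \<le> m" for m j k
  proof (cases "m = r \<and> j = 0")
    case False
    then have le: "Suc m \<le> k + j + r" using that by auto
    have "a j (ga (k + j + r - Suc m)) \<in> A (p - int j + int (k + j + r - Suc m) + 1, q - int j + int (k + j + r - Suc m))"
      using aga that by simp
    moreover have "(p - int j + int (k + j + r - Suc m) + 1, q - int j + int (k + j + r - Suc m))
        = (p + int r - int m + int k, q + int r - 1 - int m + int k)"
      using le by (simp add: of_nat_diff)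
    ultimately show ?thesis using False by (simp add: Tsgnd)
  qed simp
  have wA: "w m k \<in> A (p + int r - int m + int k, q + int r - 1 - int m + int k)" if "m \<le> r" for m k
    unfolding w_def using wterm that by (intro Tneg Tsum) auto
  have wbig: "w m k = 0" if "m \<le> r" "r \<le> k" for m k
  proof -
    have "(\<Sum>j\<le>m. if m = r \<and> j = 0 then 0 else sgnd j (a j (ga (k + j + r - Suc m)))) = 0"
    proof (rule sum.neutral, rule ballI)
      fix j assume j: "j \<in> {..m}"
      show "(if m = r \<and> j = 0 then 0 else sgnd j (a j (ga (k + j + r - Suc m)))) = 0"
      proof (cases "m = r \<and> j = 0")
        case False
        then have "r \<le> k + j + r - Suc m" using that j by auto
        thus ?thesis using agaz[of j "k + j + r - Suc m"] j that False by auto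
      qed simp
    qed
    thus ?thesis by (simp add: w_def)
  qed
  have bT: "b m \<in> TA r A (bdeg p q (Suc r) m)" if m: "m \<le> r" for m
  proof (rule TA_I)
    fix t assume "t \<in> Cbasis r"
    then consider k where "k < r" "t = al k" | k where "k < r" "t = ga k" using Cbasis_pos[OF r] by blast
    then show "b m t \<in> A (fst (bdeg p q (Suc r) m) - fst t, snd (bdeg p q (Suc r) m) - snd t)"
    proof cases
      case 1
      have "(fst (bdeg p q (Suc r) m) - fst t, snd (bdeg p q (Suc r) m) - snd t)
          = (p + int r - int m + int k, q + int r - 1 - int m + int k)"
        using 1 by (simp add: bdeg_def al_def)
      then show ?thesis using 1 b_al wA[OF m] by simp
    next
      case 2 then show ?thesis by (simp add: b_ga)
    qed
  next
    fix t assume "t \<notin> Cbasis r" then show "b m t = 0" by (rule b_off)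
  qed
  define S where "S l = (\<Sum>i\<le>l. sgnd i (Td r d i (bdeg p q (Suc r) (l - i)) (b (l - i))))" for l
  have Sapp: "S l t = (\<Sum>i\<le>l. sgnd i (Td r d i (bdeg p q (Suc r) (l - i)) (b (l - i)) t))" for l t
    by (simp add: S_def sum_fun_apply sgnd_fun)
  have Sg: "S l (ga k) = (if l = r then x (ga k) else 0)" if l: "l \<le> r" and k: "k < r" for l k
  proof -
    have "S l (ga k) = (\<Sum>i\<le>l. (if 1 \<le> l then (if i = 1 then - w (l - 1) k else 0) else 0)
        + (if Suc k < r then (if i = 0 then w l (Suc k) else 0) else 0))"
      unfolding Sapp
    proof (rule sum.cong[OF refl])
      fix i assume i: "i \<in> {..l}"
      show "sgnd i (Td r d i (bdeg p q (Suc r) (l - i)) (b (l - i)) (ga k)) =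
        (if 1 \<le> l then (if i = 1 then - w (l - 1) k else 0) else 0)
        + (if Suc k < r then (if i = 0 then w l (Suc k) else 0) else 0)"
        unfolding Td_ga[OF r k] using i k by (auto simp: b_al b_ga sgnd_def Suc_le_eq)
    qed
    also have "\<dots> = (if 1 \<le> l then - w (l - 1) k else 0) + (if Suc k < r then w l (Suc k) else 0)"
      by (simp add: sum.distrib sum_if_eq_const sum_if_cond)
    also have "(if Suc k < r then w l (Suc k) else 0) = w l (Suc k)"
      using wbig[OF l, of "Suc k"] k by auto
    also have "(if 1 \<le> l then - w (l - 1) k else 0) + w l (Suc k) = (if l = r then x (ga k) else 0)"
    proof (cases l)
      case 0
      then show ?thesis using r agaz[of 0 "k + r"] by (simp add: w_def)
    next
      case (Suc m)
      define g where "g j = sgnd j (a j (ga (k + j + r - Suc m)))" for j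
      have wm: "w m k = - (\<Sum>j\<le>m. g j)" using Suc l by (simp add: w_def g_def)
      have gl: "g (Suc m) = 0" using agaz[of "Suc m" "k + r"] Suc l by (simp add: g_def)
      have wl: "w l (Suc k) = - (\<Sum>j\<le>Suc m. if Suc m = r \<and> j = 0 then 0 else g j)"
      proof -
        have e: "\<And>j. Suc k + j + r - Suc (Suc m) = k + j + r - Suc m" by simp
        show ?thesis unfolding Suc w_def
          by (intro arg_cong[where f=uminus] sum.cong refl) (simp add: g_def e)
      qed
      show ?thesis
      proof (cases "Suc m = r")
        case True
        have "w l (Suc k) = - ((\<Sum>j\<le>Suc m. g j) - g 0)" unfolding wl using True by (simp add: sum_if0)
        also have "\<dots> = w m k + g 0" using gl wm by simp
        finally show ?thesis using Suc True[symmetric] a0 by (simp add: g_def)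
      next
        case False
        have "w l (Suc k) = - (\<Sum>j\<le>Suc m. g j)" unfolding wl using False by simp
        also have "\<dots> = w m k" using gl wm by simp
        finally show ?thesis using Suc False by simp
      qed
    qed
    finally show ?thesis .
  qed
  have Sa: "S l (al k) = (if l = r then x (al k) else 0)" if l: "l \<le> r" and k: "k < r" for l k
  proof -
    define PK where "PK m = (p + int r - int m + int k, q + int r - 1 - int m + int k)" for m
    define f where "f i j = (if l - i = r \<and> j = 0 then 0 else sgnd j (d i (PK (l - i)) (a j (ga (k + j + r - Suc (l - i))))))" for i j
    define K where "K s = k + s + r - Suc l" for s
    define F where "F s = a s (al (k + s + r - l))" for s
    define c where "c = Suc (k + r + l)"
    have step1: "sgnd i (Td r d i (bdeg p q (Suc r) (l - i)) (b (l - i)) (al k))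
        = - sgnd k (\<Sum>j\<le>l-i. sgnd i (f i j))" if i: "i \<le> l" for i
    proof -
      have P: "(fst (bdeg p q (Suc r) (l - i)) + int k, snd (bdeg p q (Suc r) (l - i)) + int k) = PK (l - i)"
        by (simp add: bdeg_def PK_def)
      have "d i (PK (l - i)) (w (l - i) k) = - (\<Sum>j\<le>l - i. d i (PK (l - i))
            (if l - i = r \<and> j = 0 then 0 else sgnd j (a j (ga (k + j + r - Suc (l - i))))))"
      proof -
        have mem: "(if l - i = r \<and> j = 0 then 0 else sgnd j (a j (ga (k + j + r - Suc (l - i))))) \<in> A (PK (l - i))"
          if "j \<in> {..l - i}" for j using wterm[of "l - i" j k] l i that by (simp add: PK_def)
        have "d i (PK (l - i)) (w (l - i) k) = - d i (PK (l - i)) (\<Sum>j\<le>l - i.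
            (if l - i = r \<and> j = 0 then 0 else sgnd j (a j (ga (k + j + r - Suc (l - i))))))"
          unfolding w_def by (rule \<delta>neg[OF Tsum[OF mem]])
        also have "d i (PK (l - i)) (\<Sum>j\<le>l - i.
            (if l - i = r \<and> j = 0 then 0 else sgnd j (a j (ga (k + j + r - Suc (l - i))))))
          = (\<Sum>j\<le>l - i. d i (PK (l - i))
            (if l - i = r \<and> j = 0 then 0 else sgnd j (a j (ga (k + j + r - Suc (l - i))))))"
          by (rule \<delta>sum[OF mem])
        finally show ?thesis .
      qed
      also have "\<dots> = - (\<Sum>j\<le>l - i. f i j)"
        unfolding f_def
      proof (intro arg_cong[where f=uminus] sum.cong refl)
        fix j assume j: "j \<in> {..l - i}"
        show "d i (PK (l - i)) (if l - i = r \<and> j = 0 then 0 else sgnd j (a j (ga (k + j + r - Suc (l - i)))))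
          = (if l - i = r \<and> j = 0 then 0 else sgnd j (d i (PK (l - i)) (a j (ga (k + j + r - Suc (l - i))))))"
        proof (cases "l - i = r \<and> j = 0")
          case False
          have "sgnd j (a j (ga (k + j + r - Suc (l - i)))) \<in> A (PK (l - i))"
            using wterm[of "l - i" j k] l i j False by (simp add: PK_def)
          then have "sgnd j (sgnd j (a j (ga (k + j + r - Suc (l - i))))) \<in> A (PK (l - i))" by (rule Tsgnd)
          then have m: "a j (ga (k + j + r - Suc (l - i))) \<in> A (PK (l - i))" by (simp add: sgnd_sgnd sgnd_even)
          show ?thesis unfolding if_not_P[OF False] by (rule \<delta>sgnd[OF m])
        qed simp
      qed
      finally have "d i (PK (l - i)) (w (l - i) k) = - (\<Sum>j\<le>l - i. f i j)" .
      then show ?thesis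
        unfolding Td_al[OF r k] P b_al[OF k] by (simp add: sgnd_sgnd sgnd_minus sgnd_sum add.commute)
    qed
    have step2: "(\<Sum>i\<le>s. sgnd i (f i (s - i))) = (if l = r \<and> s = 0 then 0 else
        sgnd (c) ((if 1 \<le> s then F (s - 1) else 0) - F s))" if s: "s \<le> l" for s
    proof (cases "l = r \<and> s = 0")
      case True then show ?thesis by (simp add: f_def)
    next
      case ns: False
      then have le: "Suc l \<le> k + s + r" using l s by auto
      have "(\<Sum>i\<le>s. sgnd i (f i (s - i))) = (\<Sum>i\<le>s. sgnd s (d i (p - int (s - i) + int (K s) + 1, q - int (s - i) + int (K s)) (a (s - i) (ga (K s)))))"
      proof (rule sum.cong[OF refl])
        fix i assume i: "i \<in> {..s}"
        have c1: "\<not> (l - i = r \<and> s - i = 0)" using ns i s l by auto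
        have c2: "k + (s - i) + r - Suc (l - i) = K s" using i s le by (simp add: K_def)
        have c3: "PK (l - i) = (p - int (s - i) + int (K s) + 1, q - int (s - i) + int (K s))"
          using i s le l by (simp add: PK_def K_def of_nat_diff)
        have c4: "i + (s - i) = s" using i by simp
        show "sgnd i (f i (s - i)) = sgnd s (d i (p - int (s - i) + int (K s) + 1, q - int (s - i) + int (K s)) (a (s - i) (ga (K s))))"
          unfolding f_def if_not_P[OF c1] c2 c3 sgnd_sgnd c4 by (rule refl)
      qed
      also have "\<dots> = sgnd s (sgnd (K s) ((if 1 \<le> s then a (s - 1) (al (K s)) else 0) - a s (al (Suc (K s)))))"
        using ZG[of s "K s"] s l by (simp add: sgnd_sum[symmetric])
      also have "\<dots> = sgnd c ((if 1 \<le> s then F (s - 1) else 0) - F s)"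
      proof -
        have par: "even (s + K s) = even c" using le by (simp add: K_def c_def) presburger
        have e1: "(if 1 \<le> s then a (s - 1) (al (K s)) else 0) = (if 1 \<le> s then F (s - 1) else 0)"
          using le by (simp add: F_def K_def)
        have e2: "a s (al (Suc (K s))) = F s" using le by (simp add: F_def K_def Suc_diff_Suc)
        show ?thesis unfolding e1 e2 sgnd_sgnd sgnd_par[OF par] by (rule refl)
      qed
      finally show ?thesis unfolding if_not_P[OF ns] .
    qed
    have "S l (al k) = - sgnd k (\<Sum>i\<le>l. \<Sum>j\<le>l-i. sgnd i (f i j))"
      unfolding Sapp using step1 by (simp add: sgnd_sum sum_negf)
    also have "\<dots> = - sgnd k (\<Sum>s\<le>l. \<Sum>i\<le>s. sgnd i (f i (s - i)))" by (simp only: tri)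
    also have "\<dots> = - sgnd k (\<Sum>s\<le>l. if l = r \<and> s = 0 then 0 else sgnd c ((if 1 \<le> s then F (s - 1) else 0) - F s))"
      using step2 by simp
    also have "\<dots> = (if l = r then x (al k) else 0)"
    proof (cases "l = r")
      case True
      have "(\<Sum>s\<le>l. if l = r \<and> s = 0 then 0 else sgnd c ((if 1 \<le> s then F (s - 1) else 0) - F s))
          = (\<Sum>s\<le>l. if s = 0 then 0 else sgnd c (F (s - 1) - F s))"
        using True by (intro sum.cong refl) auto
      also have "\<dots> = sgnd c (\<Sum>s\<le>l. if s = 0 then 0 else F (s - 1) - F s)"
        unfolding sgnd_sum by (intro sum.cong refl) simp
      also have "\<dots> = sgnd c (F 0 - F l)" by (simp only: tele2)
      also have "F l = 0" using alaz[of l "k + r"] l True by (simp add: F_def)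
      also have "F 0 = x (al k)" using True a0 by (simp add: F_def)
      finally show ?thesis using True by (simp add: sgnd_sgnd sgnd_def c_def)
    next
      case False
      have "(\<Sum>s\<le>l. if l = r \<and> s = 0 then 0 else sgnd c ((if 1 \<le> s then F (s - 1) else 0) - F s))
          = sgnd c (\<Sum>s\<le>l. (if 1 \<le> s then F (s - 1) else 0) - F s)"
        using False by (simp add: sgnd_sum)
      also have "\<dots> = sgnd c (- F l)" by (simp only: tele1)
      also have "F l = 0" using alaz[of l "k + r"] l by (simp add: F_def)
      finally show ?thesis using False by simp
    qed
    finally show ?thesis .
  qed
  have Seq: "S l = (if l = r then x else 0)" if l: "l \<le> r" for l
  proof
    fix t
    show "S l t = (if l = r then x else 0) t"
    proof (cases "t \<in> Cbasis r")
      case False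
      then show ?thesis using TA_offD[OF x False] by (simp add: Sapp Td_off)
    next
      case True
      then consider k where "k < r" "t = al k" | k where "k < r" "t = ga k" using Cbasis_pos[OF r] by blast
      then show ?thesis
      proof cases
        case 1 then show ?thesis using Sa[OF l 1(1)] by simp
      next
        case 2 then show ?thesis using Sg[OF l 2(1)] by simp
      qed
    qed
  qed
  show "x \<in> Bs (TA r A) (Td r d) (Suc r) p q"
  proof -
    have n0: "Suc r \<noteq> 0" and n1: "Suc r \<noteq> 1" using r by auto
    have f1: "x = (\<Sum>i\<le>Suc r - 1. sgnd i (Td r d i (bdeg p q (Suc r) (Suc r - 1 - i)) (b (Suc r - 1 - i))))"
      using Seq[of r] by (simp add: S_def)
    have f2: "\<forall>l\<le>Suc r - 2. (\<Sum>i\<le>l. sgnd i (Td r d i (bdeg p q (Suc r) (l - i)) (b (l - i)))) = 0"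
      using Seq r by (auto simp: S_def)
    have f3: "\<forall>i\<le>Suc r - 1. b i \<in> TA r A (bdeg p q (Suc r) i)" using bT by simp
    show ?thesis unfolding Bs_def if_not_P[OF n0] if_not_P[OF n1]
      apply (rule CollectI)
      apply (rule conjI)
       apply (rule x)
      apply (rule exI[of _ b])
      using f1 f2 f3 by (intro conjI)
  qed
qed

end

theorem mainTheorem5:
  fixes scale :: "'r::comm_ring_1 \<Rightarrow> 'b::ab_group_add \<Rightarrow> 'b"
    and n :: enat
    and A :: "int \<times> int \<Rightarrow> 'b set"
    and d :: "nat \<Rightarrow> int \<times> int \<Rightarrow> 'b \<Rightarrow> 'b"
    and r :: nat
  assumes "2 \<le> n"
    and "multicomplex scale n A d"
  shows "E_vanishes (TA r A) (Td r d) (Suc r)"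
proof -
  interpret M: mcx scale n A d by (rule mcx.intro) (rule assms(2))
  show ?thesis
  proof (cases "r = 0")
    case True thus ?thesis using M.r0_case by simp
  next
    case False then have r: "0 < r" by simp
    interpret T: mcr "TA r A" "Td r d" by (rule M.TA_mcr[OF r])
    show ?thesis unfolding E_vanishes_def using M.Z_sub_B[OF r] T.B_sub_Z[OF r] by blast
  qed
qed

end
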